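(* Let $A$ be a finite-dimensional algebra over a field $k$ and let $F^\bullet \in \mathcal{L}_A$. Then for every $k\in\mathbb{Z}$ the cohomology module $\mathrm{H}^k(F^\bullet)$ lies in ${}^\perp\mathcal{P}_A$, i.e. $\operatorname{Hom}_A(\mathrm{H}^k(F^\bullet), Z)=0$ for every projective-injective right $A$-module $Z$.
   Context: Conventions: $k$ is a field, $A$ a finite-dimensional $k$-algebra without semisimple direct summands; $\operatorname{mod}A$ is the category of finitely generated right $A$-modules, $\operatorname{proj}A$ the full subcategory of projectives; $(-)^\ast:=\operatorname{Hom}_A(-,A)$. $\mathcal{P}_A$ is the full subcategory of projective-injective modules and ${}^\perp\mathcal{P}_A$ the full subcategory of $X\in\operatorname{mod}A$ with $\operatorname{Hom}_A(X,Z)=0$ for all $Z\in\mathcal{P}_A$. $\mathrm{K}(\operatorname{proj}A)$ denotes the unbounded homotopy category of complexes of finitely generated projective right $A$-modules, written as cochain complexes $F^\bullet=(F^k,d^k:F^k\to F^{k+1})$ with cohomology $\mathrm{H}^k(F^\bullet)=\operatorname{Ker}d^k/\operatorname{Im}d^{k-1}$. Applying $(-)^\ast$ componentwise yields a complex of projective left modules written as a chain complex $F^\ast_\bullet$ with $F^\ast_k:=(F^k)^\ast$ and differential $(d^k)^\ast:F^\ast_{k+1}\to F^\ast_k$; its homology is $\mathrm{H}_k(F^\ast_\bullet)=\operatorname{Ker}((d^{k-1})^\ast)/\operatorname{Im}((d^k)^\ast)$. Kato's category: $\mathcal{L}_A=\{F^\bullet\in\mathrm{K}(\operatorname{proj}A)\mid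 \mathrm{H}^k(F^\bullet)=0 \text{ for all } k<0,\ \mathrm{H}_k(F^\ast_\bullet)=0\text{ for all }k\ge 0\}$. *)

theory Defs
  imports Main
begin

definition k_algebra :: "('k::field \<Rightarrow> 'a::ring_1) \<Rightarrow> bool" where
  "k_algebra \<phi> \<longleftrightarrow>
     (\<forall>c e. \<phi> (c + e) = \<phi> c + \<phi> e) \<and>
     (\<forall>c e. \<phi> (c * e) = \<phi> c * \<phi> e) \<and>
     \<phi> 1 = 1 \<and>
     (\<forall>c a. \<phi> c * a = a * \<phi> c)"

definition fd_algebra :: "('k::field \<Rightarrow> 'a::ring_1) \<Rightarrow> bool" where
  "fd_algebra \<phi> \<longleftrightarrow> k_algebra \<phi> \<and>
     (\<exists>S. finite S \<and> (\<forall>x::'a. \<exists>c. x = (\<Sum>s\<in>S. \<phi> (c s) * s)))"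

definition right_ideal :: "'a::ring_1 set \<Rightarrow> bool" where
  "right_ideal I \<longleftrightarrow> 0 \<in> I \<and> (\<forall>x\<in>I. \<forall>y\<in>I. x + y \<in> I) \<and> (\<forall>x\<in>I. \<forall>a. x * a \<in> I)"

text \<open>A semisimple algebra direct summand of A is eA for a nonzero central idempotent e
  such that the ring eA (with identity e) is semisimple, i.e. every right ideal of eA is
  a direct summand of eA.\<close>
definition semisimple_summand :: "'a::ring_1 \<Rightarrow> bool" where
  "semisimple_summand e \<longleftrightarrow> e \<noteq> 0 \<and> e * e = e \<and> (\<forall>a. e * a = a * e) \<and>
     (\<forall>I. right_ideal I \<and> I \<subseteq> range ((*) e) \<longrightarrow>
        (\<exists>J. right_ideal J \<and> J \<subseteq> range ((*) e) \<and> I \<inter> J = {0} \<and>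
             (\<forall>x\<in>range ((*) e). \<exists>i\<in>I. \<exists>j\<in>J. x = i + j)))"

definition no_semisimple_summand :: "'a::ring_1 itself \<Rightarrow> bool" where
  "no_semisimple_summand _ \<longleftrightarrow> (\<forall>e::'a. \<not> semisimple_summand e)"

record ('a, 'm) rmod =
  mcarrier :: "'m set"
  madd :: "'m \<Rightarrow> 'm \<Rightarrow> 'm"
  mzero :: "'m"
  msmul :: "'m \<Rightarrow> 'a \<Rightarrow> 'm"

definition rmodule :: "('a::ring_1, 'm) rmod \<Rightarrow> bool" where
  "rmodule M \<longleftrightarrow>
     mzero M \<in> mcarrier M \<and>
     (\<forall>x\<in>mcarrier M. \<forall>y\<in>mcarrier M. madd M x y \<in> mcarrier M) \<and>
     (\<forall>x\<in>mcarrier M. \<forall>a. msmul M x a \<in> mcarrier M) \<and>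
     (\<forall>x\<in>mcarrier M. \<forall>y\<in>mcarrier M. \<forall>z\<in>mcarrier M.
         madd M (madd M x y) z = madd M x (madd M y z)) \<and>
     (\<forall>x\<in>mcarrier M. \<forall>y\<in>mcarrier M. madd M x y = madd M y x) \<and>
     (\<forall>x\<in>mcarrier M. madd M x (mzero M) = x) \<and>
     (\<forall>x\<in>mcarrier M. \<exists>y\<in>mcarrier M. madd M x y = mzero M) \<and>
     (\<forall>x\<in>mcarrier M. msmul M x 1 = x) \<and>
     (\<forall>x\<in>mcarrier M. \<forall>a b. msmul M (msmul M x a) b = msmul M x (a * b)) \<and>
     (\<forall>x\<in>mcarrier M. \<forall>y\<in>mcarrier M. \<forall>a.
         msmul M (madd M x y) a = madd M (msmul M x a) (msmul M y a)) \<and>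
     (\<forall>x\<in>mcarrier M. \<forall>a b. msmul M x (a + b) = madd M (msmul M x a) (msmul M x b))"

fun lincomb :: "('a, 'm) rmod \<Rightarrow> 'm list \<Rightarrow> 'a list \<Rightarrow> 'm" where
  "lincomb M (g # gs) (a # as) = madd M (msmul M g a) (lincomb M gs as)"
| "lincomb M _ _ = mzero M"

definition fin_gen :: "('a, 'm) rmod \<Rightarrow> bool" where
  "fin_gen M \<longleftrightarrow> (\<exists>gs. set gs \<subseteq> mcarrier M \<and>
      (\<forall>x\<in>mcarrier M. \<exists>as. length as = length gs \<and> x = lincomb M gs as))"

definition modA :: "('a::ring_1, 'm) rmod \<Rightarrow> bool" where
  "modA M \<longleftrightarrow> rmodule M \<and> fin_gen M"

definition rhom :: "('a, 'm) rmod \<Rightarrow> ('a, 'n) rmod \<Rightarrow> ('m \<Rightarrow> 'n) \<Rightarrow> bool" where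
  "rhom M N f \<longleftrightarrow> f ` mcarrier M \<subseteq> mcarrier N \<and>
     (\<forall>x\<in>mcarrier M. \<forall>y\<in>mcarrier M. f (madd M x y) = madd N (f x) (f y)) \<and>
     (\<forall>x\<in>mcarrier M. \<forall>a. f (msmul M x a) = msmul N (f x) a)"

definition ideal_mod :: "'a::ring_1 set \<Rightarrow> ('a, 'a) rmod" where
  "ideal_mod I = \<lparr>mcarrier = I, madd = (+), mzero = 0, msmul = (*)\<rparr>"

definition regA :: "('a::ring_1, 'a) rmod" where
  "regA = ideal_mod UNIV"

definition free_mod :: "nat \<Rightarrow> ('a::ring_1, nat \<Rightarrow> 'a) rmod" where
  "free_mod n = \<lparr>mcarrier = {v. \<forall>i\<ge>n. v i = 0},
                 madd = (\<lambda>v w i. v i + w i), mzero = (\<lambda>i. 0),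
                 msmul = (\<lambda>v a i. v i * a)\<rparr>"

text \<open>Projective finitely generated module: direct summand of some A^n.\<close>
definition projective :: "('a::ring_1, 'm) rmod \<Rightarrow> bool" where
  "projective M \<longleftrightarrow> (\<exists>n i p. rhom M (free_mod n) i \<and> rhom (free_mod n) M p \<and>
       (\<forall>x\<in>mcarrier M. p (i x) = x))"

text \<open>Injective module (Baer's criterion).\<close>
definition injective :: "('a::ring_1, 'm) rmod \<Rightarrow> bool" where
  "injective M \<longleftrightarrow> (\<forall>I g. right_ideal I \<and> rhom (ideal_mod I) M g \<longrightarrow>
       (\<exists>h. rhom regA M h \<and> (\<forall>x\<in>I. h x = g x)))"

definition proj_inj :: "('a::ring_1, 'm) rmod \<Rightarrow> bool" where
  "proj_inj M \<longleftrightarrow> modA M \<and> projective M \<and> injective M"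

definition proj_complex :: "(int \<Rightarrow> ('a::ring_1, 'f) rmod) \<Rightarrow> (int \<Rightarrow> 'f \<Rightarrow> 'f) \<Rightarrow> bool" where
  "proj_complex F d \<longleftrightarrow>
     (\<forall>k. modA (F k) \<and> projective (F k) \<and> rhom (F k) (F (k + 1)) (d k)) \<and>
     (\<forall>k. \<forall>x\<in>mcarrier (F k). d (k + 1) (d k x) = mzero (F (k + 2)))"

definition coset :: "('a, 'm) rmod \<Rightarrow> 'm set \<Rightarrow> 'm \<Rightarrow> 'm set" where
  "coset M N x = {madd M x n | n. n \<in> N}"

definition quot_mod :: "('a, 'm) rmod \<Rightarrow> 'm set \<Rightarrow> 'm set \<Rightarrow> ('a, 'm set) rmod" where
  "quot_mod M K N = \<lparr>mcarrier = coset M N ` K,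
      madd = (\<lambda>X Y. {madd M x y | x y. x \<in> X \<and> y \<in> Y}),
      mzero = coset M N (mzero M),
      msmul = (\<lambda>X a. {madd M (msmul M x a) n | x n. x \<in> X \<and> n \<in> N})\<rparr>"

definition cycles :: "(int \<Rightarrow> ('a, 'f) rmod) \<Rightarrow> (int \<Rightarrow> 'f \<Rightarrow> 'f) \<Rightarrow> int \<Rightarrow> 'f set" where
  "cycles F d k = {x \<in> mcarrier (F k). d k x = mzero (F (k + 1))}"

definition boundaries :: "(int \<Rightarrow> ('a, 'f) rmod) \<Rightarrow> (int \<Rightarrow> 'f \<Rightarrow> 'f) \<Rightarrow> int \<Rightarrow> 'f set" where
  "boundaries F d k = d (k - 1) ` mcarrier (F (k - 1))"

definition cohom :: "(int \<Rightarrow> ('a, 'f) rmod) \<Rightarrow> (int \<Rightarrow> 'f \<Rightarrow> 'f) \<Rightarrow> int \<Rightarrow> ('a, 'f set) rmod" where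
  "cohom F d k = quot_mod (F k) (cycles F d k) (boundaries F d k)"

text \<open>H_k(F^*) = 0, i.e. Ker((d^(k-1))^*) \<subseteq> Im((d^k)^*) inside (F^k)^* = Hom_A(F^k, A).
  Elements of Hom_A(F^k,A) are compared on the carrier of F^k.\<close>
definition dual_homology_vanishes :: "(int \<Rightarrow> ('a::ring_1, 'f) rmod) \<Rightarrow> (int \<Rightarrow> 'f \<Rightarrow> 'f) \<Rightarrow> int \<Rightarrow> bool" where
  "dual_homology_vanishes F d k \<longleftrightarrow>
     (\<forall>\<phi>. rhom (F k) regA \<phi> \<and> (\<forall>x\<in>mcarrier (F (k - 1)). \<phi> (d (k - 1) x) = 0) \<longrightarrow>
        (\<exists>\<psi>. rhom (F (k + 1)) regA \<psi> \<and> (\<forall>x\<in>mcarrier (F k). \<phi> x = \<psi> (d k x))))"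

text \<open>Kato's category L_A.\<close>
definition in_L :: "(int \<Rightarrow> ('a::ring_1, 'f) rmod) \<Rightarrow> (int \<Rightarrow> 'f \<Rightarrow> 'f) \<Rightarrow> bool" where
  "in_L F d \<longleftrightarrow> proj_complex F d \<and>
     (\<forall>k<0. cycles F d k \<subseteq> boundaries F d k) \<and>
     (\<forall>k\<ge>0. dual_homology_vanishes F d k)"

text \<open>X in perp(P_A): Hom_A(X,Z) = 0 for all Z in P_A (Z of arbitrary carrier type).\<close>
definition hom_zero :: "('a, 'm) rmod \<Rightarrow> ('a, 'n) rmod \<Rightarrow> bool" where
  "hom_zero M N \<longleftrightarrow> (\<forall>f. rhom M N f \<longrightarrow> (\<forall>x\<in>mcarrier M. f x = mzero N))"

end

theory Submission imports Defs "HOL-Algebra.Group" begin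

context comm_group begin
lemma L3: "a \<in> carrier G \<Longrightarrow> b \<in> carrier G \<Longrightarrow> a \<otimes> (b \<otimes> inv a) = b"
  by (metis inv_closed m_assoc m_comm r_inv r_one)
lemma L1: assumes "a \<in> carrier G" "b \<in> carrier G" "c \<in> carrier G" "d \<in> carrier G" "a \<otimes> inv b = c \<otimes> inv d"
  shows "a \<otimes> inv c = b \<otimes> inv d"
proof -
  have "a = (a \<otimes> inv b) \<otimes> b" using assms(1,2) by (metis inv_closed l_inv m_assoc r_one)
  also have "\<dots> = (c \<otimes> inv d) \<otimes> b" using assms by simp
  finally have "a \<otimes> inv c = c \<otimes> ((b \<otimes> inv d) \<otimes> inv c)" using assms by (simp add: m_ac)
  also have "\<dots> = b \<otimes> inv d" using assms L3 by simp
  finally show ?thesis .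
qed
lemma L2: "a \<in> carrier G \<Longrightarrow> b \<in> carrier G \<Longrightarrow> c \<in> carrier G \<Longrightarrow> d \<in> carrier G \<Longrightarrow> (a \<otimes> b) \<otimes> inv (c \<otimes> d) = (a \<otimes> inv c) \<otimes> (b \<otimes> inv d)"
  by (simp add: inv_mult m_ac)
lemma L4: "a \<in> carrier G \<Longrightarrow> b \<in> carrier G \<Longrightarrow> c \<in> carrier G \<Longrightarrow> d \<in> carrier G \<Longrightarrow> (a \<otimes> b) \<otimes> (c \<otimes> d) = (a \<otimes> c) \<otimes> (b \<otimes> d)"
  by (simp add: m_ac)
end

definition grp :: "('a, 'm) rmod \<Rightarrow> 'm monoid" where
 "grp M = \<lparr>carrier = mcarrier M, mult = madd M, one = mzero M\<rparr>"

locale rm = fixes M :: "('a::ring_1, 'm) rmod" assumes rmod: "rmodule M"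
begin

lemma Rall: "mzero M \<in> mcarrier M \<and>
     (\<forall>x\<in>mcarrier M. \<forall>y\<in>mcarrier M. madd M x y \<in> mcarrier M) \<and>
     (\<forall>x\<in>mcarrier M. \<forall>a. msmul M x a \<in> mcarrier M) \<and>
     (\<forall>x\<in>mcarrier M. \<forall>y\<in>mcarrier M. \<forall>z\<in>mcarrier M.
         madd M (madd M x y) z = madd M x (madd M y z)) \<and>
     (\<forall>x\<in>mcarrier M. \<forall>y\<in>mcarrier M. madd M x y = madd M y x) \<and>
     (\<forall>x\<in>mcarrier M. madd M x (mzero M) = x) \<and>
     (\<forall>x\<in>mcarrier M. \<exists>y\<in>mcarrier M. madd M x y = mzero M) \<and>
     (\<forall>x\<in>mcarrier M. msmul M x 1 = x) \<and>
     (\<forall>x\<in>mcarrier M. \<forall>a b. msmul M (msmul M x a) b = msmul M x (a * b)) \<and>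
     (\<forall>x\<in>mcarrier M. \<forall>y\<in>mcarrier M. \<forall>a.
         msmul M (madd M x y) a = madd M (msmul M x a) (msmul M y a)) \<and>
     (\<forall>x\<in>mcarrier M. \<forall>a b. msmul M x (a + b) = madd M (msmul M x a) (msmul M x b))"
  using rmod unfolding rmodule_def .

lemmas R = Rall[THEN conjunct1]
  Rall[THEN conjunct2, THEN conjunct1]
  Rall[THEN conjunct2, THEN conjunct2, THEN conjunct1]
  Rall[THEN conjunct2, THEN conjunct2, THEN conjunct2, THEN conjunct1]
  Rall[THEN conjunct2, THEN conjunct2, THEN conjunct2, THEN conjunct2, THEN conjunct1]
  Rall[THEN conjunct2, THEN conjunct2, THEN conjunct2, THEN conjunct2, THEN conjunct2, THEN conjunct1]
  Rall[THEN conjunct2, THEN conjunct2, THEN conjunct2, THEN conjunct2, THEN conjunct2, THEN conjunct2, THEN conjunct1]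
  Rall[THEN conjunct2, THEN conjunct2, THEN conjunct2, THEN conjunct2, THEN conjunct2, THEN conjunct2, THEN conjunct2, THEN conjunct1]
  Rall[THEN conjunct2, THEN conjunct2, THEN conjunct2, THEN conjunct2, THEN conjunct2, THEN conjunct2, THEN conjunct2, THEN conjunct2, THEN conjunct1]
  Rall[THEN conjunct2, THEN conjunct2, THEN conjunct2, THEN conjunct2, THEN conjunct2, THEN conjunct2, THEN conjunct2, THEN conjunct2, THEN conjunct2, THEN conjunct1]
  Rall[THEN conjunct2, THEN conjunct2, THEN conjunct2, THEN conjunct2, THEN conjunct2, THEN conjunct2, THEN conjunct2, THEN conjunct2, THEN conjunct2, THEN conjunct2]

lemma zero_c[simp]: "mzero M \<in> mcarrier M" by (rule R(1))
lemma add_c[simp]: "x \<in> mcarrier M \<Longrightarrow> y \<in> mcarrier M \<Longrightarrow> madd M x y \<in> mcarrier M"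
  using R(2) by blast
lemma smul_c[simp]: "x \<in> mcarrier M \<Longrightarrow> msmul M x a \<in> mcarrier M"
  using R(3) by blast
lemma assoc: "x \<in> mcarrier M \<Longrightarrow> y \<in> mcarrier M \<Longrightarrow> z \<in> mcarrier M \<Longrightarrow>
   madd M (madd M x y) z = madd M x (madd M y z)"
  using R(4) by blast
lemma comm: "x \<in> mcarrier M \<Longrightarrow> y \<in> mcarrier M \<Longrightarrow> madd M x y = madd M y x"
  using R(5) by blast
lemma rzero[simp]: "x \<in> mcarrier M \<Longrightarrow> madd M x (mzero M) = x"
  using R(6) by blast
lemma lzero[simp]: "x \<in> mcarrier M \<Longrightarrow> madd M (mzero M) x = x"
  using comm rzero zero_c by metis
lemma inv_ex: "x \<in> mcarrier M \<Longrightarrow> \<exists>y\<in>mcarrier M. madd M x y = mzero M"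
  using R(7) by blast
lemma smul_one[simp]: "x \<in> mcarrier M \<Longrightarrow> msmul M x 1 = x"
  using R(8) by blast
lemma smul_smul: "x \<in> mcarrier M \<Longrightarrow> msmul M (msmul M x a) b = msmul M x (a * b)"
  using R(9) by blast
lemma smul_add: "x \<in> mcarrier M \<Longrightarrow> y \<in> mcarrier M \<Longrightarrow>
   msmul M (madd M x y) a = madd M (msmul M x a) (msmul M y a)"
  using R(10) by blast
lemma add_smul: "x \<in> mcarrier M \<Longrightarrow> msmul M x (a + b) = madd M (msmul M x a) (msmul M x b)"
  using R(11) by blast

lemma cancel: assumes "a \<in> mcarrier M" "b \<in> mcarrier M" "c \<in> mcarrier M" "madd M a b = madd M a c"
  shows "b = c"
proof -
  obtain y where y: "y \<in> mcarrier M" "madd M a y = mzero M" using inv_ex assms(1) by blast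
  have ya: "madd M y a = mzero M" using comm[OF y(1) assms(1)] y(2) by (rule trans)
  have "b = madd M (mzero M) b" using lzero[OF assms(2)] by (rule sym)
  also have "\<dots> = madd M (madd M y a) b" using ya by (rule arg_cong[symmetric])
  also have "\<dots> = madd M y (madd M a b)" by (rule assoc[OF y(1) assms(1,2)])
  also have "\<dots> = madd M y (madd M a c)" using assms(4) by (rule arg_cong)
  also have "\<dots> = madd M (madd M y a) c" by (rule assoc[OF y(1) assms(1,3), symmetric])
  also have "\<dots> = madd M (mzero M) c" using ya by (rule arg_cong)
  also have "\<dots> = c" by (rule lzero[OF assms(3)])
  finally show ?thesis .
qed

lemma self_zero: "x \<in> mcarrier M \<Longrightarrow> madd M x x = x \<Longrightarrow> x = mzero M"
  using cancel[of x x "mzero M"] by simp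

lemma smul_0[simp]: "x \<in> mcarrier M \<Longrightarrow> msmul M x 0 = mzero M"
proof -
  assume x: "x \<in> mcarrier M"
  have "madd M (msmul M x 0) (msmul M x 0) = msmul M x 0" using add_smul[OF x, of 0 0] by simp
  then show ?thesis using self_zero[OF smul_c[OF x]] by blast
qed

lemma zero_smul[simp]: "msmul M (mzero M) a = mzero M"
proof -
  have "madd M (msmul M (mzero M) a) (msmul M (mzero M) a) = msmul M (mzero M) a"
    using smul_add[OF zero_c zero_c, of a] by simp
  then show ?thesis using self_zero[OF smul_c[OF zero_c]] by blast
qed

lemma neg_r: "x \<in> mcarrier M \<Longrightarrow> madd M x (msmul M x (-1)) = mzero M"
  using add_smul[of x 1 "-1"] by simp

lemma grp: "comm_group (grp M)"
proof (rule comm_groupI)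
  show "\<And>x y. x \<in> carrier (grp M) \<Longrightarrow> y \<in> carrier (grp M) \<Longrightarrow> x \<otimes>\<^bsub>grp M\<^esub> y \<in> carrier (grp M)"
    by (simp add: grp_def)
  show "\<one>\<^bsub>grp M\<^esub> \<in> carrier (grp M)" by (simp add: grp_def)
  show "\<And>x y z. x \<in> carrier (grp M) \<Longrightarrow> y \<in> carrier (grp M) \<Longrightarrow> z \<in> carrier (grp M) \<Longrightarrow>
       x \<otimes>\<^bsub>grp M\<^esub> y \<otimes>\<^bsub>grp M\<^esub> z = x \<otimes>\<^bsub>grp M\<^esub> (y \<otimes>\<^bsub>grp M\<^esub> z)"
    by (simp add: grp_def assoc)
  show "\<And>x y. x \<in> carrier (grp M) \<Longrightarrow> y \<in> carrier (grp M) \<Longrightarrow> x \<otimes>\<^bsub>grp M\<^esub> y = y \<otimes>\<^bsub>grp M\<^esub> x"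
    by (simp add: grp_def comm)
  show "\<And>x. x \<in> carrier (grp M) \<Longrightarrow> \<one>\<^bsub>grp M\<^esub> \<otimes>\<^bsub>grp M\<^esub> x = x"
    by (simp add: grp_def)
  show "\<And>x. x \<in> carrier (grp M) \<Longrightarrow> \<exists>y\<in>carrier (grp M). y \<otimes>\<^bsub>grp M\<^esub> x = \<one>\<^bsub>grp M\<^esub>"
    using inv_ex comm by (simp add: grp_def)
qed

sublocale G: comm_group "grp M" by (rule grp)

lemma gc: "carrier (grp M) = mcarrier M" by (simp add: grp_def)
lemma gm: "madd M = mult (grp M)" by (simp add: grp_def)
lemma g1: "mzero M = one (grp M)" by (simp add: grp_def)
lemma gneg: "x \<in> mcarrier M \<Longrightarrow> msmul M x (-1) = inv\<^bsub>grp M\<^esub> x"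
  using neg_r[of x] by (metis G.inv_equality G.m_comm gc gm g1 smul_c)

lemma M1: assumes "a \<in> mcarrier M" "b \<in> mcarrier M" "c \<in> mcarrier M" "d \<in> mcarrier M"
  "madd M a (msmul M b (-1)) = madd M c (msmul M d (-1))"
  shows "madd M a (msmul M c (-1)) = madd M b (msmul M d (-1))"
  using assms G.L1[of a b c d] by (simp add: gneg gm gc)

lemma M2: assumes "a \<in> mcarrier M" "b \<in> mcarrier M" "c \<in> mcarrier M" "d \<in> mcarrier M"
  shows "madd M (madd M a b) (msmul M (madd M c d) (-1)) = madd M (madd M a (msmul M c (-1))) (madd M b (msmul M d (-1)))"
  using assms G.L2[of a b c d] gneg[OF add_c[OF assms(3,4)]] by (simp add: gneg gm gc)

lemma M3: assumes "a \<in> mcarrier M" "b \<in> mcarrier M"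
  shows "madd M a (madd M b (msmul M a (-1))) = b"
  using assms G.L3[of a b] by (simp add: gneg gm gc)

lemma M4: assumes "a \<in> mcarrier M" "b \<in> mcarrier M" "c \<in> mcarrier M" "d \<in> mcarrier M"
  shows "madd M (madd M a b) (madd M c d) = madd M (madd M a c) (madd M b d)"
  using assms G.L4[of a b c d] by (simp add: gm gc)

lemma neg_smul: "x \<in> mcarrier M \<Longrightarrow> msmul M (msmul M x (-1)) c = msmul M (msmul M x c) (-1)"
  by (simp add: smul_smul)

end

lemma rhom_zero: assumes "rmodule M" "rmodule N" "rhom M N f" shows "f (mzero M) = mzero N"
proof -
  interpret N: rm N by (rule rm.intro) (fact assms(2))
  interpret M: rm M by (rule rm.intro) (fact assms(1))
  have c: "f (mzero M) \<in> mcarrier N" using assms(3) unfolding rhom_def by auto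
  have "f (mzero M) = f (madd M (mzero M) (mzero M))" by simp
  also have "\<dots> = madd N (f (mzero M)) (f (mzero M))" using assms(3) M.zero_c unfolding rhom_def by metis
  finally show ?thesis using N.self_zero c by metis
qed

lemma free_simps[simp]:
  "mcarrier (free_mod n) = {v. \<forall>i\<ge>n. v i = 0}"
  "madd (free_mod n) = (\<lambda>v w i. v i + w i)"
  "mzero (free_mod n) = (\<lambda>i. 0)"
  "msmul (free_mod n) = (\<lambda>v a i. v i * a)"
  by (simp_all add: free_mod_def)

lemma free_rmod: "rmodule (free_mod n)"
  unfolding rmodule_def free_simps
  apply (intro conjI)
  apply (simp; fail)
  apply (simp; fail)
  apply (simp; fail)
  apply (simp add: add.assoc; fail)
  apply (simp add: add.commute; fail)
  apply (simp; fail)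
  apply (intro ballI, rule_tac x="\<lambda>i. - x i" in bexI; simp; fail)
  apply (simp; fail)
  apply (simp add: mult.assoc; fail)
  apply (simp add: distrib_right; fail)
  apply (simp add: distrib_left; fail)
  done

definition sub :: "('a, 'm) rmod \<Rightarrow> 'm set \<Rightarrow> bool" where
  "sub M U \<longleftrightarrow> U \<subseteq> mcarrier M \<and> mzero M \<in> U \<and> (\<forall>x\<in>U. \<forall>y\<in>U. madd M x y \<in> U) \<and>
     (\<forall>x\<in>U. \<forall>a. msmul M x a \<in> U)"

definition lin :: "('a, 'm) rmod \<Rightarrow> ('a, 'n) rmod \<Rightarrow> 'm set \<Rightarrow> ('m \<Rightarrow> 'n) \<Rightarrow> bool" where
  "lin M N U g \<longleftrightarrow> (\<forall>x\<in>U. g x \<in> mcarrier N) \<and>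
     (\<forall>x\<in>U. \<forall>y\<in>U. g (madd M x y) = madd N (g x) (g y)) \<and>
     (\<forall>x\<in>U. \<forall>a. g (msmul M x a) = msmul N (g x) a)"

lemma regA_simps[simp]:
  "mcarrier regA = UNIV" "madd regA = (+)" "mzero regA = 0" "msmul regA = (*)"
  by (simp_all add: regA_def ideal_mod_def)

lemma ideal_simps[simp]:
  "mcarrier (ideal_mod I) = I" "madd (ideal_mod I) = (+)" "mzero (ideal_mod I) = 0" "msmul (ideal_mod I) = (*)"
  by (simp_all add: ideal_mod_def)

lemma free_ext:
  fixes Z :: "('a::ring_1, 'z) rmod"
  assumes Zm: "rmodule Z" and Zi: "injective Z"
  shows "sub (free_mod m) U \<Longrightarrow> lin (free_mod m) Z U g \<Longrightarrow>
     \<exists>h. rhom (free_mod m) Z h \<and> (\<forall>u\<in>U. h u = g u)"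
proof (induction m arbitrary: U g)
  interpret Z: rm Z by (rule rm.intro) (fact Zm)
  case 0
  have "rhom (free_mod 0) Z (\<lambda>_. mzero Z)" unfolding rhom_def by (auto simp: Z.zero_c)
  moreover have "\<forall>u\<in>U. mzero Z = g u"
  proof
    fix u assume u: "u \<in> U"
    then have u0: "u = (\<lambda>i. 0)" using 0(1) unfolding sub_def by auto
    have gc: "g u \<in> mcarrier Z" using 0(2) u unfolding lin_def by auto
    have "g (madd (free_mod 0) u u) = madd Z (g u) (g u)" using 0(2) u unfolding lin_def by auto
    then have "madd Z (g u) (g u) = g u" using u0 by simp
    then show "mzero Z = g u" using Z.self_zero gc by metis
  qed
  ultimately show ?case by metis
next
  interpret Z: rm Z by (rule rm.intro) (fact Zm)
  case (Suc m)
  define U' where "U' = {u\<in>U. u m = 0}"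
  have Uc: "\<And>u. u \<in> U \<Longrightarrow> \<forall>i\<ge>Suc m. u i = 0" using Suc.prems(1) unfolding sub_def by auto
  have Uadd: "\<And>u w. u \<in> U \<Longrightarrow> w \<in> U \<Longrightarrow> (\<lambda>i. u i + w i) \<in> U" using Suc.prems(1) unfolding sub_def by auto
  have Usmul: "\<And>u a. u \<in> U \<Longrightarrow> (\<lambda>i. u i * a) \<in> U" using Suc.prems(1) unfolding sub_def by auto
  have U0: "(\<lambda>i. 0) \<in> U" using Suc.prems(1) unfolding sub_def by auto
  have gc: "\<And>u. u \<in> U \<Longrightarrow> g u \<in> mcarrier Z" using Suc.prems(2) unfolding lin_def by auto
  have gadd: "\<And>u w. u \<in> U \<Longrightarrow> w \<in> U \<Longrightarrow> g (\<lambda>i. u i + w i) = madd Z (g u) (g w)"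
    using Suc.prems(2) unfolding lin_def by auto
  have gsmul: "\<And>u a. u \<in> U \<Longrightarrow> g (\<lambda>i. u i * a) = msmul Z (g u) a"
    using Suc.prems(2) unfolding lin_def by auto
  have U'c: "\<forall>i\<ge>m. u i = 0" if "u \<in> U" "u m = 0" for u
  proof (intro allI impI)
    fix i assume "m \<le> i"
    then have "i = m \<or> Suc m \<le> i" by auto
    then show "u i = 0" using that Uc by auto
  qed
  have "sub (free_mod m) U'"
    unfolding sub_def U'_def free_simps
  proof (intro conjI ballI allI subsetI)
    fix u assume "u \<in> {u \<in> U. u m = 0}"
    then show "u \<in> {v. \<forall>i\<ge>m. v i = 0}" using U'c by auto
  next
    show "(\<lambda>i. 0) \<in> {u \<in> U. u m = 0}" using U0 by simp
  next
    fix x y assume "x \<in> {u \<in> U. u m = 0}" "y \<in> {u \<in> U. u m = 0}"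
    then show "(\<lambda>i. x i + y i) \<in> {u \<in> U. u m = 0}" using Uadd by simp
  next
    fix x a assume "x \<in> {u \<in> U. u m = 0}"
    then show "(\<lambda>i. x i * a) \<in> {u \<in> U. u m = 0}" using Usmul by simp
  qed
  moreover have "lin (free_mod m) Z U' g"
    unfolding lin_def U'_def using gc gadd gsmul by auto
  ultimately obtain h' where h': "rhom (free_mod m) Z h'" "\<forall>u\<in>U'. h' u = g u"
    using Suc.IH by blast
  have h'c: "\<And>v. \<forall>i\<ge>m. v i = 0 \<Longrightarrow> h' v \<in> mcarrier Z" using h'(1) unfolding rhom_def by auto
  have h'add: "\<And>v w. \<forall>i\<ge>m. v i = 0 \<Longrightarrow> \<forall>i\<ge>m. w i = 0 \<Longrightarrow> h' (\<lambda>i. v i + w i) = madd Z (h' v) (h' w)"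
    using h'(1) unfolding rhom_def by auto
  have h'smul: "\<And>v a. \<forall>i\<ge>m. v i = 0 \<Longrightarrow> h' (\<lambda>i. v i * a) = msmul Z (h' v) a"
    using h'(1) unfolding rhom_def by auto
  define tr :: "(nat \<Rightarrow> 'a) \<Rightarrow> nat \<Rightarrow> 'a" where "tr v = v(m := 0)" for v
  have trc: "\<forall>i\<ge>m. tr v i = 0" if "\<forall>i\<ge>Suc m. v i = 0" for v
  proof (intro allI impI)
    fix i assume "m \<le> i"
    then have "i = m \<or> Suc m \<le> i" by auto
    then show "tr v i = 0" using that unfolding tr_def by auto
  qed
  have tradd: "\<And>v w. tr (\<lambda>i. v i + w i) = (\<lambda>i. tr v i + tr w i)" unfolding tr_def by auto
  have trsmul: "\<And>v a. tr (\<lambda>i. v i * a) = (\<lambda>i. tr v i * a)" unfolding tr_def by auto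
  define I where "I = (\<lambda>u. u m) ` U"
  have RI: "right_ideal I" unfolding right_ideal_def I_def
  proof (intro conjI ballI allI)
    show "0 \<in> (\<lambda>u. u m) ` U" using U0 by force
    fix x y assume "x \<in> (\<lambda>u. u m) ` U" "y \<in> (\<lambda>u. u m) ` U"
    then show "x + y \<in> (\<lambda>u. u m) ` U" using Uadd by force
  next
    fix x a assume "x \<in> (\<lambda>u. u m) ` U"
    then show "x * a \<in> (\<lambda>u. u m) ` U" using Usmul by force
  qed
  define ng where "ng x = msmul Z x (-1)" for x
  define \<phi> where "\<phi> a = (let u = SOME u. u \<in> U \<and> u m = a in madd Z (g u) (ng (h' (tr u))))" for a
  have key: "\<phi> (w m) = madd Z (g w) (ng (h' (tr w)))" if w: "w \<in> U" for w
  proof -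
    define u where "u = (SOME u. u \<in> U \<and> u m = w m)"
    have "u \<in> U \<and> u m = w m" unfolding u_def using someI_ex[of "\<lambda>u. u \<in> U \<and> u m = w m"] w by blast
    then have u: "u \<in> U" "u m = w m" by auto
    define e where "e = (\<lambda>i. u i + w i * (-1))"
    have eU: "e \<in> U" unfolding e_def using Uadd Usmul u w by blast
    have e0: "e m = 0" unfolding e_def using u by simp
    have "e \<in> U'" using eU e0 unfolding U'_def by auto
    then have he: "h' e = g e" using h' by auto
    have ee: "e = (\<lambda>i. tr u i + tr w i * (-1))" unfolding e_def tr_def using e0 e_def by auto
    have tu: "\<forall>i\<ge>m. tr u i = 0" using trc Uc u(1) by blast
    have tw: "\<forall>i\<ge>m. tr w i = 0" using trc Uc w by blast
    have tw': "\<forall>i\<ge>m. tr w i * (-1) = 0" using tw by simp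
    have h1: "h' (\<lambda>i. tr u i + tr w i * (-1)) = madd Z (h' (tr u)) (h' (\<lambda>i. tr w i * (-1)))"
      by (rule h'add[OF tu tw'])
    have h2: "h' (\<lambda>i. tr w i * (-1)) = msmul Z (h' (tr w)) (-1)" by (rule h'smul[OF tw])
    have g1: "g e = madd Z (g u) (g (\<lambda>i. w i * (-1)))"
      unfolding e_def by (rule gadd[OF u(1) Usmul[OF w]])
    have g2: "g (\<lambda>i. w i * (-1)) = msmul Z (g w) (-1)" by (rule gsmul[OF w])
    have "madd Z (g u) (ng (g w)) = madd Z (h' (tr u)) (ng (h' (tr w)))"
      unfolding ng_def using he ee h1 h2 g1 g2 by (simp only:)
    then have "madd Z (g u) (ng (h' (tr u))) = madd Z (g w) (ng (h' (tr w)))"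
      unfolding ng_def by (rule Z.M1[OF gc[OF u(1)] gc[OF w] h'c[OF tu] h'c[OF tw]])
    then show ?thesis unfolding \<phi>_def u_def[symmetric] Let_def by simp
  qed
  have phi_hom: "rhom (ideal_mod I) Z \<phi>" unfolding rhom_def ideal_simps
  proof (intro conjI ballI allI subsetI)
    fix x assume "x \<in> \<phi> ` I"
    then obtain w where "w \<in> U" "x = \<phi> (w m)" unfolding I_def by auto
    then show "x \<in> mcarrier Z" using key gc h'c trc Uc unfolding ng_def by auto
  next
    fix a b assume "a \<in> I" "b \<in> I"
    then obtain w w' where w: "w \<in> U" "w' \<in> U" "a = w m" "b = w' m" unfolding I_def by auto
    have "\<phi> (a + b) = \<phi> ((\<lambda>i. w i + w' i) m)" using w by simp
    also have "\<dots> = madd Z (g (\<lambda>i. w i + w' i)) (ng (h' (tr (\<lambda>i. w i + w' i))))"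
      using key Uadd w by blast
    also have "\<dots> = madd Z (madd Z (g w) (g w')) (ng (madd Z (h' (tr w)) (h' (tr w'))))"
      using gadd h'add trc Uc w tradd by simp
    also have "\<dots> = madd Z (madd Z (g w) (ng (h' (tr w)))) (madd Z (g w') (ng (h' (tr w'))))"
      unfolding ng_def by (rule Z.M2[OF gc[OF w(1)] gc[OF w(2)] h'c[OF trc[OF Uc[OF w(1)]]] h'c[OF trc[OF Uc[OF w(2)]]]])
    also have "\<dots> = madd Z (\<phi> a) (\<phi> b)" using key w by simp
    finally show "\<phi> (a + b) = madd Z (\<phi> a) (\<phi> b)" .
  next
    fix a c assume "a \<in> I"
    then obtain w where w: "w \<in> U" "a = w m" unfolding I_def by auto
    have "\<phi> (a * c) = \<phi> ((\<lambda>i. w i * c) m)" using w by simp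
    also have "\<dots> = madd Z (g (\<lambda>i. w i * c)) (ng (h' (tr (\<lambda>i. w i * c))))"
      using key Usmul w by blast
    also have "\<dots> = madd Z (msmul Z (g w) c) (ng (msmul Z (h' (tr w)) c))"
      using gsmul h'smul trc Uc w trsmul by simp
    also have "\<dots> = msmul Z (madd Z (g w) (ng (h' (tr w)))) c"
      unfolding ng_def using Z.smul_add[OF gc[OF w(1)] Z.smul_c[OF h'c[OF trc[OF Uc[OF w(1)]]]]]
        Z.neg_smul[OF h'c[OF trc[OF Uc[OF w(1)]]]] by simp
    also have "\<dots> = msmul Z (\<phi> a) c" using key w by simp
    finally show "\<phi> (a * c) = msmul Z (\<phi> a) c" .
  qed
  obtain H where H: "rhom regA Z H" "\<forall>a\<in>I. H a = \<phi> a"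
    using Zi RI phi_hom unfolding injective_def by blast
  have Hc: "\<And>a. H a \<in> mcarrier Z" using H(1) unfolding rhom_def by auto
  have Hadd: "\<And>a b. H (a + b) = madd Z (H a) (H b)" using H(1) unfolding rhom_def by auto
  have Hsmul: "\<And>a b. H (a * b) = msmul Z (H a) b" using H(1) unfolding rhom_def by auto
  define h where "h v = madd Z (h' (tr v)) (H (v m))" for v
  have "rhom (free_mod (Suc m)) Z h" unfolding rhom_def free_simps
  proof (intro conjI ballI allI subsetI)
    fix x assume "x \<in> h ` {v. \<forall>i\<ge>Suc m. v i = 0}"
    then show "x \<in> mcarrier Z" unfolding h_def using h'c trc Hc by auto
  next
    fix v w assume v: "v \<in> {v. \<forall>i\<ge>Suc m. v i = (0::'a)}" and w: "w \<in> {v. \<forall>i\<ge>Suc m. v i = (0::'a)}"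
    have "h (\<lambda>i. v i + w i) = madd Z (madd Z (h' (tr v)) (h' (tr w))) (madd Z (H (v m)) (H (w m)))"
      unfolding h_def using tradd h'add trc v w Hadd by simp
    also have "\<dots> = madd Z (h v) (h w)" unfolding h_def
      using Z.M4 h'c trc v w Hc by simp
    finally show "h (\<lambda>i. v i + w i) = madd Z (h v) (h w)" .
  next
    fix v a assume v: "v \<in> {v. \<forall>i\<ge>Suc m. v i = (0::'a)}"
    show "h (\<lambda>i. v i * a) = msmul Z (h v) a"
      unfolding h_def using trsmul h'smul trc v Hsmul Z.smul_add h'c Hc by simp
  qed
  moreover have "\<forall>u\<in>U. h u = g u"
  proof
    fix u assume u: "u \<in> U"
    have "h u = madd Z (h' (tr u)) (madd Z (g u) (ng (h' (tr u))))"
      unfolding h_def using H(2) key u unfolding I_def by auto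
    also have "\<dots> = g u" unfolding ng_def using Z.M3 h'c trc Uc gc u by simp
    finally show "h u = g u" .
  qed
  ultimately show ?case by blast
qed


lemma rhomD:
  assumes "rhom M N f"
  shows "\<And>x. x \<in> mcarrier M \<Longrightarrow> f x \<in> mcarrier N"
    and "\<And>x y. x \<in> mcarrier M \<Longrightarrow> y \<in> mcarrier M \<Longrightarrow> f (madd M x y) = madd N (f x) (f y)"
    and "\<And>x a. x \<in> mcarrier M \<Longrightarrow> f (msmul M x a) = msmul N (f x) a"
  using assms unfolding rhom_def by auto

lemma proj_ext:
  fixes M :: "('a::ring_1, 'm) rmod" and Z :: "('a, 'z) rmod"
  assumes Mm: "rmodule M" and Mp: "projective M" and U: "sub M U" and g: "lin M Z U g"
    and Zm: "rmodule Z" and Zi: "injective Z"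
  shows "\<exists>f. rhom M Z f \<and> (\<forall>x\<in>U. f x = g x)"
proof -
  obtain n i p where ip: "rhom M (free_mod n) i" "rhom (free_mod n) M p" "\<forall>x\<in>mcarrier M. p (i x) = x"
    using Mp unfolding projective_def by blast
  have UM: "U \<subseteq> mcarrier M" and U0: "mzero M \<in> U" and Uadd: "\<And>x y. x \<in> U \<Longrightarrow> y \<in> U \<Longrightarrow> madd M x y \<in> U"
    and Usmul: "\<And>x a. x \<in> U \<Longrightarrow> msmul M x a \<in> U" using U unfolding sub_def by auto
  have gc: "\<And>x. x \<in> U \<Longrightarrow> g x \<in> mcarrier Z" and gadd: "\<And>x y. x \<in> U \<Longrightarrow> y \<in> U \<Longrightarrow> g (madd M x y) = madd Z (g x) (g y)"
    and gsmul: "\<And>x a. x \<in> U \<Longrightarrow> g (msmul M x a) = msmul Z (g x) a" using g unfolding lin_def by auto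
  note iD = rhomD[OF ip(1)]
  have i0: "i (mzero M) = mzero (free_mod n)" by (rule rhom_zero[OF Mm free_rmod ip(1)])
  have "sub (free_mod n) (i ` U)" unfolding sub_def
  proof (intro conjI ballI allI)
    show "i ` U \<subseteq> mcarrier (free_mod n)" using iD(1) UM by blast
    show "mzero (free_mod n) \<in> i ` U" using i0 U0 by (metis imageI)
    fix u w assume "u \<in> i ` U" "w \<in> i ` U"
    then obtain x y where "x \<in> U" "y \<in> U" "u = i x" "w = i y" by auto
    then show "madd (free_mod n) u w \<in> i ` U" using iD(2)[of x y] UM Uadd by (metis imageI subsetD)
  next
    fix u a assume "u \<in> i ` U"
    then obtain x where "x \<in> U" "u = i x" by auto
    then show "msmul (free_mod n) u a \<in> i ` U" using iD(3)[of x a] UM Usmul by (metis imageI subsetD)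
  qed
  moreover have "lin (free_mod n) Z (i ` U) (\<lambda>u. g (p u))" unfolding lin_def
  proof (intro conjI ballI allI)
    fix u assume "u \<in> i ` U"
    then obtain x where "x \<in> U" "u = i x" by auto
    then show "g (p u) \<in> mcarrier Z" using ip(3) UM gc by auto
  next
    fix u w assume "u \<in> i ` U" "w \<in> i ` U"
    then obtain x y where xy: "x \<in> U" "y \<in> U" "u = i x" "w = i y" by auto
    then have "madd (free_mod n) u w = i (madd M x y)" using iD(2)[of x y] UM by (simp add: subset_iff)
    then show "g (p (madd (free_mod n) u w)) = madd Z (g (p u)) (g (p w))"
      using xy ip(3) UM Uadd gadd by (simp add: subset_iff)
  next
    fix u a assume "u \<in> i ` U"
    then obtain x where xy: "x \<in> U" "u = i x" by auto
    then have "msmul (free_mod n) u a = i (msmul M x a)" using iD(3)[of x a] UM by (simp add: subset_iff)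
    then show "g (p (msmul (free_mod n) u a)) = msmul Z (g (p u)) a"
      using xy ip(3) UM Usmul gsmul by (simp add: subset_iff)
  qed
  ultimately obtain h where h: "rhom (free_mod n) Z h" "\<forall>u\<in>i ` U. h u = g (p u)"
    using free_ext[OF Zm Zi] by blast
  have "rhom M Z (\<lambda>x. h (i x))" using rhomD[OF h(1)] iD unfolding rhom_def by auto
  moreover have "\<forall>x\<in>U. h (i x) = g x" using h(2) ip(3) UM by auto
  ultimately show ?thesis by blast
qed

lemma exact_Z:
  fixes F :: "int \<Rightarrow> ('a::ring_1, 'f) rmod" and Z :: "('a, 'z) rmod"
  assumes dv: "dual_homology_vanishes F d k" and f: "rhom (F k) Z f"
    and fv: "\<forall>x\<in>mcarrier (F (k - 1)). f (d (k - 1) x) = mzero Z"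
    and Zm: "rmodule Z" and Zp: "projective Z"
  shows "\<exists>\<psi>. rhom (F (k + 1)) Z \<psi> \<and> (\<forall>x\<in>mcarrier (F k). f x = \<psi> (d k x))"
proof -
  obtain n i p where ip: "rhom Z (free_mod n) i" "rhom (free_mod n) Z p" "\<forall>x\<in>mcarrier Z. p (i x) = x"
    using Zp unfolding projective_def by blast
  note iD = rhomD[OF ip(1)] and fD = rhomD[OF f] and pD = rhomD[OF ip(2)]
  have i0: "i (mzero Z) = (\<lambda>j. 0)" using rhom_zero[OF Zm free_rmod ip(1)] by simp
  have "\<forall>j. \<exists>\<psi>. rhom (F (k + 1)) regA \<psi> \<and> (\<forall>x\<in>mcarrier (F k). i (f x) j = \<psi> (d k x))"
  proof
    fix j
    have "rhom (F k) regA (\<lambda>x. i (f x) j)" unfolding rhom_def using fD iD by auto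
    moreover have "\<forall>x\<in>mcarrier (F (k - 1)). i (f (d (k - 1) x)) j = 0" using fv i0 by simp
    ultimately show "\<exists>\<psi>. rhom (F (k + 1)) regA \<psi> \<and> (\<forall>x\<in>mcarrier (F k). i (f x) j = \<psi> (d k x))"
      using dv unfolding dual_homology_vanishes_def by blast
  qed
  then obtain \<Psi> where \<Psi>: "\<And>j. rhom (F (k + 1)) regA (\<Psi> j)"
    "\<And>j. \<forall>x\<in>mcarrier (F k). i (f x) j = \<Psi> j (d k x)" by metis
  define \<psi> where "\<psi> y = p (\<lambda>j. if j < n then \<Psi> j y else 0)" for y
  have vc: "(\<lambda>j. if j < n then \<Psi> j y else 0) \<in> mcarrier (free_mod n)" for y by simp
  have "rhom (F (k + 1)) Z \<psi>" unfolding rhom_def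
  proof (intro conjI ballI allI subsetI)
    fix z assume "z \<in> \<psi> ` mcarrier (F (k + 1))"
    then show "z \<in> mcarrier Z" unfolding \<psi>_def using pD(1) vc by auto
  next
    fix x y assume xy: "x \<in> mcarrier (F (k + 1))" "y \<in> mcarrier (F (k + 1))"
    have "(\<lambda>j. if j < n then \<Psi> j (madd (F (k + 1)) x y) else 0) =
      madd (free_mod n) (\<lambda>j. if j < n then \<Psi> j x else 0) (\<lambda>j. if j < n then \<Psi> j y else 0)"
      using rhomD(2)[OF \<Psi>(1)] xy by auto
    then show "\<psi> (madd (F (k + 1)) x y) = madd Z (\<psi> x) (\<psi> y)"
      unfolding \<psi>_def using pD(2) vc by metis
  next
    fix x a assume x: "x \<in> mcarrier (F (k + 1))"
    have "(\<lambda>j. if j < n then \<Psi> j (msmul (F (k + 1)) x a) else 0) =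
      msmul (free_mod n) (\<lambda>j. if j < n then \<Psi> j x else 0) a"
      using rhomD(3)[OF \<Psi>(1)] x by auto
    then show "\<psi> (msmul (F (k + 1)) x a) = msmul Z (\<psi> x) a"
      unfolding \<psi>_def using pD(3) vc by metis
  qed
  moreover have "\<forall>x\<in>mcarrier (F k). f x = \<psi> (d k x)"
  proof
    fix x assume x: "x \<in> mcarrier (F k)"
    have "i (f x) \<in> mcarrier (free_mod n)" using iD(1) fD(1) x by blast
    then have "i (f x) = (\<lambda>j. if j < n then \<Psi> j (d k x) else 0)" using \<Psi>(2) x by fastforce
    then show "f x = \<psi> (d k x)" unfolding \<psi>_def using ip(3) fD(1) x by metis
  qed
  ultimately show ?thesis by blast
qed


lemma quot_simps[simp]:
  "mcarrier (quot_mod M K N) = coset M N ` K"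
  "madd (quot_mod M K N) = (\<lambda>X Y. {madd M x y | x y. x \<in> X \<and> y \<in> Y})"
  "mzero (quot_mod M K N) = coset M N (mzero M)"
  "msmul (quot_mod M K N) = (\<lambda>X a. {madd M (msmul M x a) n | x n. x \<in> X \<and> n \<in> N})"
  by (simp_all add: quot_mod_def)

context rm begin

lemma cos_add: assumes B: "sub M B" and x: "x \<in> mcarrier M" and y: "y \<in> mcarrier M"
  shows "{madd M x' y' | x' y'. x' \<in> coset M B x \<and> y' \<in> coset M B y} = coset M B (madd M x y)"
proof -
  have BM: "B \<subseteq> mcarrier M" and B0: "mzero M \<in> B" and Badd: "\<And>a b. a \<in> B \<Longrightarrow> b \<in> B \<Longrightarrow> madd M a b \<in> B"
    using B unfolding sub_def by auto
  show ?thesis unfolding coset_def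
  proof (intro equalityI subsetI)
    fix z assume "z \<in> {madd M x' y' |x' y'. x' \<in> {madd M x n |n. n \<in> B} \<and> y' \<in> {madd M y n |n. n \<in> B}}"
    then obtain b b' where bb: "b \<in> B" "b' \<in> B" "z = madd M (madd M x b) (madd M y b')" by auto
    have bc: "b \<in> mcarrier M" "b' \<in> mcarrier M" using BM bb by auto
    have "z = madd M (madd M x y) (madd M b b')" using M4[OF x bc(1) y bc(2)] bb(3) by simp
    then show "z \<in> {madd M (madd M x y) n |n. n \<in> B}" using Badd bb by blast
  next
    fix z assume "z \<in> {madd M (madd M x y) n |n. n \<in> B}"
    then obtain b where b: "b \<in> B" "z = madd M (madd M x y) b" by auto
    then have "z = madd M (madd M x b) (madd M y (mzero M))" using M4[of x b y "mzero M"] x y BM by auto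
    then show "z \<in> {madd M x' y' |x' y'. x' \<in> {madd M x n |n. n \<in> B} \<and> y' \<in> {madd M y n |n. n \<in> B}}"
      using b B0 by blast
  qed
qed

lemma cos_smul: assumes B: "sub M B" and x: "x \<in> mcarrier M"
  shows "{madd M (msmul M x' a) n | x' n. x' \<in> coset M B x \<and> n \<in> B} = coset M B (msmul M x a)"
proof -
  have BM: "B \<subseteq> mcarrier M" and B0: "mzero M \<in> B" and Badd: "\<And>a b. a \<in> B \<Longrightarrow> b \<in> B \<Longrightarrow> madd M a b \<in> B"
    and Bs: "\<And>b a. b \<in> B \<Longrightarrow> msmul M b a \<in> B"
    using B unfolding sub_def by auto
  show ?thesis unfolding coset_def
  proof (intro equalityI subsetI)
    fix z assume "z \<in> {madd M (msmul M x' a) n |x' n. x' \<in> {madd M x n |n. n \<in> B} \<and> n \<in> B}"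
    then obtain b b' where bb: "b \<in> B" "b' \<in> B" "z = madd M (msmul M (madd M x b) a) b'" by auto
    have bc: "b \<in> mcarrier M" "b' \<in> mcarrier M" using BM bb by auto
    have "z = madd M (msmul M x a) (madd M (msmul M b a) b')"
      using smul_add[OF x bc(1), of a] assoc[OF smul_c[OF x] smul_c[OF bc(1)] bc(2)] bb(3) by simp
    then show "z \<in> {madd M (msmul M x a) n |n. n \<in> B}" using Badd Bs bb by blast
  next
    fix z assume "z \<in> {madd M (msmul M x a) n |n. n \<in> B}"
    then obtain b where b: "b \<in> B" "z = madd M (msmul M x a) b" by auto
    then have "z = madd M (msmul M (madd M x (mzero M)) a) b" using x by simp
    then show "z \<in> {madd M (msmul M x' a) n |x' n. x' \<in> {madd M x n |n. n \<in> B} \<and> n \<in> B}"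
      using b B0 by blast
  qed
qed

lemma cos_B: assumes B: "sub M B" and b: "b \<in> B"
  shows "coset M B b = coset M B (mzero M)"
proof -
  have BM: "B \<subseteq> mcarrier M" and B0: "mzero M \<in> B" and Badd: "\<And>a b. a \<in> B \<Longrightarrow> b \<in> B \<Longrightarrow> madd M a b \<in> B"
    and Bs: "\<And>b a. b \<in> B \<Longrightarrow> msmul M b a \<in> B"
    using B unfolding sub_def by auto
  have "coset M B (mzero M) = B" unfolding coset_def using BM by force
  moreover have "coset M B b = B"
  proof (intro equalityI subsetI)
    fix z assume "z \<in> coset M B b" then show "z \<in> B" unfolding coset_def using Badd b by auto
  next
    fix z assume z: "z \<in> B"
    have bc: "b \<in> mcarrier M" "z \<in> mcarrier M" using BM b z by auto
    have "z = madd M b (madd M z (msmul M b (-1)))" using M3[OF bc] by simp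
    then show "z \<in> coset M B b" unfolding coset_def using Badd Bs z b by blast
  qed
  ultimately show ?thesis by simp
qed

end

theorem mainTheorem1:
  fixes \<phi> :: "'k::field \<Rightarrow> 'a::ring_1"
    and F :: "int \<Rightarrow> ('a, 'f) rmod" and d :: "int \<Rightarrow> 'f \<Rightarrow> 'f"
    and Z :: "('a, 'z) rmod" and n :: int
  assumes "fd_algebra \<phi>"
    and "no_semisimple_summand TYPE('a)"
    and "in_L F d"
    and "proj_inj Z"
  shows "hom_zero (cohom F d n) Z"
proof -
  have inL: "proj_complex F d \<and> (\<forall>k<0. cycles F d k \<subseteq> boundaries F d k) \<and>
     (\<forall>k\<ge>0. dual_homology_vanishes F d k)" using assms(3) unfolding in_L_def .
  have pc: "(\<forall>k. modA (F k) \<and> projective (F k) \<and> rhom (F k) (F (k + 1)) (d k)) \<and>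
     (\<forall>k. \<forall>x\<in>mcarrier (F k). d (k + 1) (d k x) = mzero (F (k + 2)))"
    using inL[THEN conjunct1] unfolding proj_complex_def .
  have Fm: "rmodule (F k)" for k using pc[THEN conjunct1, THEN spec, of k] unfolding modA_def by (elim conjE)
  have Fp: "projective (F k)" for k using pc[THEN conjunct1, THEN spec, of k] by (elim conjE)
  have dh: "rhom (F k) (F (k + 1)) (d k)" for k using pc[THEN conjunct1, THEN spec, of k] by (elim conjE)
  have dd: "d (k + 1) (d k x) = mzero (F (k + 2))" if "x \<in> mcarrier (F k)" for k x
    using pc[THEN conjunct2, THEN spec, of k] that by (rule bspec)
  have pZ: "modA Z \<and> projective Z \<and> injective Z" using assms(4) unfolding proj_inj_def .
  have Zm: "rmodule Z" using pZ[THEN conjunct1] unfolding modA_def by (elim conjE)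
  have Zp: "projective Z" using pZ by (elim conjE)
  have Zi: "injective Z" using pZ by (elim conjE)
  interpret Z: rm Z by (rule rm.intro) (fact Zm)
  interpret M: rm "F n" by (rule rm.intro) (fact Fm)
  define C where "C = cycles F d n"
  define B where "B = boundaries F d n"
  note dD = rhomD[OF dh[of n]] and dD' = rhomD[OF dh[of "n - 1"]]
  have d0: "d n (mzero (F n)) = mzero (F (n + 1))" by (rule rhom_zero[OF Fm Fm dh])
  have d0': "d (n - 1) (mzero (F (n - 1))) = mzero (F n)" using rhom_zero[OF Fm Fm dh[of "n - 1"]] by simp
  interpret M1: rm "F (n + 1)" by (rule rm.intro) (fact Fm)
  have subC: "sub (F n) C" unfolding sub_def C_def cycles_def
  proof (intro conjI ballI allI subsetI)
    fix x assume "x \<in> {x \<in> mcarrier (F n). d n x = mzero (F (n + 1))}"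
    then show "x \<in> mcarrier (F n)" by simp
  next
    show "mzero (F n) \<in> {x \<in> mcarrier (F n). d n x = mzero (F (n + 1))}" using d0 by simp
  next
    fix x y assume x: "x \<in> {x \<in> mcarrier (F n). d n x = mzero (F (n + 1))}"
      and y: "y \<in> {x \<in> mcarrier (F n). d n x = mzero (F (n + 1))}"
    then show "madd (F n) x y \<in> {x \<in> mcarrier (F n). d n x = mzero (F (n + 1))}"
      using dD(2)[of x y] by simp
  next
    fix x a assume x: "x \<in> {x \<in> mcarrier (F n). d n x = mzero (F (n + 1))}"
    then show "msmul (F n) x a \<in> {x \<in> mcarrier (F n). d n x = mzero (F (n + 1))}"
      using dD(3)[of x a] by simp
  qed
  have subB: "sub (F n) B" unfolding sub_def B_def boundaries_def
  proof (intro conjI ballI allI)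
    show "d (n - 1) ` mcarrier (F (n - 1)) \<subseteq> mcarrier (F n)" using dD'(1) by auto
    show "mzero (F n) \<in> d (n - 1) ` mcarrier (F (n - 1))" using d0' rm.zero_c[OF rm.intro[OF Fm]] by (metis imageI)
    fix x y assume "x \<in> d (n - 1) ` mcarrier (F (n - 1))" "y \<in> d (n - 1) ` mcarrier (F (n - 1))"
    then obtain y1 y2 where y: "y1 \<in> mcarrier (F (n - 1))" "y2 \<in> mcarrier (F (n - 1))" "x = d (n - 1) y1" "y = d (n - 1) y2"
      by blast
    have "madd (F n) x y = d (n - 1) (madd (F (n - 1)) y1 y2)" using dD'(2)[OF y(1,2)] y(3,4) by simp
    moreover have "madd (F (n - 1)) y1 y2 \<in> mcarrier (F (n - 1))" using rm.add_c[OF rm.intro[OF Fm] y(1,2)] .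
    ultimately show "madd (F n) x y \<in> d (n - 1) ` mcarrier (F (n - 1))" by blast
  next
    fix x a assume "x \<in> d (n - 1) ` mcarrier (F (n - 1))"
    then obtain y1 where y: "y1 \<in> mcarrier (F (n - 1))" "x = d (n - 1) y1" by blast
    have "msmul (F n) x a = d (n - 1) (msmul (F (n - 1)) y1 a)" using dD'(3)[OF y(1)] y(2) by simp
    moreover have "msmul (F (n - 1)) y1 a \<in> mcarrier (F (n - 1))" using rm.smul_c[OF rm.intro[OF Fm] y(1)] .
    ultimately show "msmul (F n) x a \<in> d (n - 1) ` mcarrier (F (n - 1))" by blast
  qed
  have dd': "d n (d (n - 1) y) = mzero (F (n + 1))" if "y \<in> mcarrier (F (n - 1))" for y
    using dd[of y "n - 1"] that by (simp add: add.commute)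
  have BC: "B \<subseteq> C" unfolding B_def C_def boundaries_def cycles_def
    using dD'(1) dd' by auto
  have CM: "C \<subseteq> mcarrier (F n)" using subC unfolding sub_def by auto
  have C0: "mzero (F n) \<in> C" using subC unfolding sub_def by auto
  have Cadd: "\<And>x y. x \<in> C \<Longrightarrow> y \<in> C \<Longrightarrow> madd (F n) x y \<in> C" using subC unfolding sub_def by auto
  have Csmul: "\<And>x a. x \<in> C \<Longrightarrow> msmul (F n) x a \<in> C" using subC unfolding sub_def by auto
  show ?thesis unfolding hom_zero_def
  proof (intro allI impI ballI)
    fix g X assume g: "rhom (cohom F d n) Z g" and X: "X \<in> mcarrier (cohom F d n)"
    have cc: "mcarrier (cohom F d n) = coset (F n) B ` C" unfolding cohom_def C_def B_def by simp
    note gD = rhomD[OF g]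
    define f0 where "f0 x = g (coset (F n) B x)" for x
    have f0c: "x \<in> C \<Longrightarrow> f0 x \<in> mcarrier Z" for x unfolding f0_def using gD(1) cc by auto
    have qa: "madd (cohom F d n) = (\<lambda>X Y. {madd (F n) x y | x y. x \<in> X \<and> y \<in> Y})"
      unfolding cohom_def by simp
    have qs: "msmul (cohom F d n) = (\<lambda>X a. {madd (F n) (msmul (F n) x a) m | x m. x \<in> X \<and> m \<in> B})"
      unfolding cohom_def B_def by simp
    have f0add: "f0 (madd (F n) x y) = madd Z (f0 x) (f0 y)" if xy: "x \<in> C" "y \<in> C" for x y
    proof -
      have "coset (F n) B x \<in> mcarrier (cohom F d n)" "coset (F n) B y \<in> mcarrier (cohom F d n)"
        using cc xy by auto
      from gD(2)[OF this] show ?thesis unfolding f0_def qa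
        using M.cos_add[OF subB, of x y] CM xy by (simp add: subset_iff)
    qed
    have f0smul: "f0 (msmul (F n) x a) = msmul Z (f0 x) a" if xy: "x \<in> C" for x a
    proof -
      have "coset (F n) B x \<in> mcarrier (cohom F d n)"
        using cc xy by auto
      from gD(3)[OF this, of a] show ?thesis unfolding f0_def qs
        using M.cos_smul[OF subB, of x a] CM xy by (simp add: subset_iff)
    qed
    have f00: "f0 (mzero (F n)) = mzero Z"
    proof -
      have "madd Z (f0 (mzero (F n))) (f0 (mzero (F n))) = f0 (mzero (F n))"
        using f0add[OF C0 C0] by simp
      then show ?thesis using f0c[OF C0] Z.self_zero by blast
    qed
    have f0B: "b \<in> B \<Longrightarrow> f0 b = mzero Z" for b
      using f00 M.cos_B[OF subB] unfolding f0_def by metis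
    obtain x where x: "x \<in> C" "X = coset (F n) B x" using X cc by auto
    have "X = coset (F n) B x" by (fact x(2))
    show "g X = mzero Z"
    proof (cases "n < 0")
      case True
      then have "C \<subseteq> B" using inL[THEN conjunct2, THEN conjunct1, THEN spec, of n] unfolding C_def B_def by simp
      then show ?thesis using f0B x unfolding f0_def by auto
    next
      case False
      have "lin (F n) Z C f0" unfolding lin_def using f0c f0add f0smul by auto
      then obtain f where f: "rhom (F n) Z f" "\<forall>x\<in>C. f x = f0 x"
        using proj_ext[OF Fm Fp subC _ Zm Zi] by blast
      have "\<forall>y\<in>mcarrier (F (n - 1)). f (d (n - 1) y) = mzero Z"
      proof
        fix y assume y: "y \<in> mcarrier (F (n - 1))"
        then have "d (n - 1) y \<in> B" unfolding B_def boundaries_def by auto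
        then show "f (d (n - 1) y) = mzero Z" using f(2) f0B BC by auto
      qed
      moreover have "dual_homology_vanishes F d n" using inL[THEN conjunct2, THEN conjunct2, THEN spec, of n] False by simp
      ultimately obtain \<psi> where \<psi>: "rhom (F (n + 1)) Z \<psi>" "\<forall>x\<in>mcarrier (F n). f x = \<psi> (d n x)"
        using exact_Z[where F=F and d=d and k=n and Z=Z and f=f] f(1) Zm Zp by blast
      have "d n x = mzero (F (n + 1))" using x(1) unfolding C_def cycles_def by auto
      then have "f x = mzero Z" using \<psi> rhom_zero[OF Fm Zm \<psi>(1)] x(1) CM by auto
      then show ?thesis using f(2) x unfolding f0_def by auto
    qed
  qed
qed

end
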